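(* Let $K\ge2$, $m\ge1$, $C>0$, let $\mathbf{y}\in[K]^m$, let $\mathbf{Q}\in\mathbb{R}^{m\times m}$ be a symmetric positive semidefinite kernel matrix on the labeled nodes and $Q_{t1},\dots,Q_{tm}$ the kernel values of a test node $t$. For each class $c\in[K]$ let $\mathbf{y}^c\in\{-1,1\}^m$ with $y_i^c=1$ iff $y_i=c$, and $y_i'^c=1$ iff $y_i=c$ (else $0$). Let $\hat c$ be the originally predicted class (defined below). Set $M^c_{u_i}=\sum_jC|Q_{ij}|-1$, $M^c_{v_i}=\sum_jC|Q_{ij}|+1$, $p^L=-C\sum_{i=1}^m|Q_{ti}|$, $p^U=C\sum_{i=1}^m|Q_{ti}|$. Consider the MILP $$M(\mathbf{y}):\ \min\ p_{\hat c}-p^*$$ over $p^*\in\mathbb{R}$, $\mathbf{p}\in\mathbb{R}^K$, $b_c\in\{0,1\}$ ($c\ne\hat c$), and for each $c\in[K]$: $\boldsymbol\alpha^c,\tilde{\mathbf{y}}^c,\mathbf{z}^c,\mathbf{u}^c,\mathbf{v}^c\in\mathbb{R}^m$, $\tilde{\mathbf{y}}'^c,\mathbf{s}^c,\mathbf{t}^c\in\{0,1\}^m$, $\mathbf{R}^c\in\mathbb{R}^{m\times m}$, subject to: $\sum_{i=1}^m\big(1-\sum_{c=1}^Ky_i'^c\tilde y_i'^c\big)\le\lfloor\epsilon m\rfloor$; $\sum_{c=1}^K\tilde y_i'^c=1$ for all $i\in[m]$; $\sum_{c\ne\hat c}b_c=1$; for all $c\ne\hat c$: $p^*\ge p_c$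 and $p^*\le p_c+(1-b_c)(p^U-p^L)$; for all $c\in[K]$: $p_c=\sum_{i=1}^mz_i^cQ_{ti}$; for all $c\in[K]$ and $i,j\in[m]$: $\sum_{j}R^c_{ij}Q_{ij}-1-u_i^c+v_i^c=0$, $-C(1+\tilde y^c_i)\le R^c_{ij}+z^c_j\le C(1+\tilde y^c_i)$, $-C(1-\tilde y^c_i)\le R^c_{ij}-z^c_j\le C(1-\tilde y^c_i)$; for all $c\in[K]$, $i\in[m]$: $-\alpha_i^c\le z_i^c\le\alpha_i^c$, $\alpha^c_i-C(1-\tilde y^c_i)\le z_i^c\le C(1+\tilde y_i^c)-\alpha_i^c$, $u_i^c\le M^c_{u_i}s_i^c$, $\alpha_i^c\le C(1-s_i^c)$, $v_i^c\le M^c_{v_i}t_i^c$, $\alpha_i^c\ge Ct_i^c$, $u_i^c\ge0$, $v_i^c\ge0$, $\tilde y_i^c=2\tilde y_i'^c-1$. Then the prediction for node $t$ is certifiably robust if the optimal value of $M(\mathbf{y})$ is greater than zero and non-robust otherwise; equivalently, the optimal value equals $\min_{\tilde{\mathbf{y}}\in\mathcal{A}(\mathbf{y})}\big(p_{\hat c}(\tilde{\mathbf{y}})-\max_{c\ne\hat c}p_c(\tilde{\mathbf{y}})\big)$.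
   Context: Multi-class classification by one-vs-all kernel SVMs. For a binary label vector $\mathbf{w}\in\{-1,1\}^m$, the bias-free kernel SVM dual is $D(\mathbf{w}):\ \min_{\boldsymbol\alpha}-\sum_i\alpha_i+\tfrac12\sum_{i,j}w_iw_j\alpha_i\alpha_jQ_{ij}$ s.t. $0\le\alpha_i\le C$; $\mathcal{S}(\mathbf{w})$ is its set of optimal solutions. For multi-class labels $\tilde{\mathbf{y}}\in[K]^m$ and $c\in[K]$, let $\tilde{\mathbf{y}}^c\in\{-1,1\}^m$ with $\tilde y^c_i=1$ iff $\tilde y_i=c$, and define the class score $p_c(\tilde{\mathbf{y}})=\sum_{i=1}^m\tilde y^c_i\alpha^c_iQ_{ti}$ for any $\boldsymbol\alpha^c\in\mathcal{S}(\tilde{\mathbf{y}}^c)$ (this value does not depend on the choice of optimal $\boldsymbol\alpha^c$). The predicted class is $\arg\max_cp_c$; $\hat c$ is the predicted class for the clean labels $\mathbf{y}$. The adversary chooses $\tilde{\mathbf{y}}\in\mathcal{A}(\mathbf{y})=\{\tilde{\mathbf{y}}\in[K]^m:\|\tilde{\mathbf{y}}-\mathbf{y}\|_0\le\lfloor\epsilon m\rfloor\}$, $\epsilon\in[0,1]$. The prediction is certifiably robust if $p_{\hat c}(\tilde{\mathbf{y}})-\max_{c\ne\hat c}p_c(\tilde{\mathbf{y}})>0$ for all $\tilde{\mathbf{y}}\in\mathcal{A}(\mathbf{y})$. *)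

theory Defs
  imports Complex_Main
begin

(* Indices: labeled nodes i \<in> {1..m}, classes c \<in> {1..K}.
   Vectors/matrices are functions on nat, only their values on the index ranges matter. *)

definition bin_label :: "(nat \<Rightarrow> nat) \<Rightarrow> nat \<Rightarrow> nat \<Rightarrow> real" where
  "bin_label y c i = (if y i = c then 1 else -1)"

definition onehot_label :: "(nat \<Rightarrow> nat) \<Rightarrow> nat \<Rightarrow> nat \<Rightarrow> real" where
  "onehot_label y c i = (if y i = c then 1 else 0)"

definition svm_dual_obj :: "nat \<Rightarrow> (nat \<Rightarrow> nat \<Rightarrow> real) \<Rightarrow> (nat \<Rightarrow> real) \<Rightarrow> (nat \<Rightarrow> real) \<Rightarrow> real" where
  "svm_dual_obj m Q w \<alpha> =
     - (\<Sum>i=1..m. \<alpha> i) + 1/2 * (\<Sum>i=1..m. \<Sum>j=1..m. w i * w j * \<alpha> i * \<alpha> j * Q i j)"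

definition svm_dual_feasible :: "nat \<Rightarrow> real \<Rightarrow> (nat \<Rightarrow> real) \<Rightarrow> bool" where
  "svm_dual_feasible m C \<alpha> \<longleftrightarrow> (\<forall>i\<in>{1..m}. 0 \<le> \<alpha> i \<and> \<alpha> i \<le> C)"

definition svm_opt_set :: "nat \<Rightarrow> real \<Rightarrow> (nat \<Rightarrow> nat \<Rightarrow> real) \<Rightarrow> (nat \<Rightarrow> real) \<Rightarrow> (nat \<Rightarrow> real) set" where
  "svm_opt_set m C Q w = {\<alpha>. svm_dual_feasible m C \<alpha> \<and>
      (\<forall>\<beta>. svm_dual_feasible m C \<beta> \<longrightarrow> svm_dual_obj m Q w \<alpha> \<le> svm_dual_obj m Q w \<beta>)}"

definition class_score :: "nat \<Rightarrow> real \<Rightarrow> (nat \<Rightarrow> nat \<Rightarrow> real) \<Rightarrow> (nat \<Rightarrow> real) \<Rightarrow> (nat \<Rightarrow> nat) \<Rightarrow> nat \<Rightarrow> real" where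
  "class_score m C Q Qt yt c =
     (let \<alpha> = (SOME \<alpha>. \<alpha> \<in> svm_opt_set m C Q (bin_label yt c))
      in \<Sum>i=1..m. bin_label yt c i * \<alpha> i * Qt i)"

text \<open>Adversarial label set A(y): labels in [K] on [m], at most floor(eps m) flips
  (outside [m] the labels are left unchanged, which has no effect).\<close>
definition adv_set :: "nat \<Rightarrow> nat \<Rightarrow> real \<Rightarrow> (nat \<Rightarrow> nat) \<Rightarrow> (nat \<Rightarrow> nat) set" where
  "adv_set K m \<epsilon> y = {yt. (\<forall>i\<in>{1..m}. yt i \<in> {1..K}) \<and> (\<forall>i. i \<notin> {1..m} \<longrightarrow> yt i = y i) \<and>
      card {i\<in>{1..m}. yt i \<noteq> y i} \<le> nat \<lfloor>\<epsilon> * real m\<rfloor>}"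

definition score_margin :: "nat \<Rightarrow> nat \<Rightarrow> real \<Rightarrow> (nat \<Rightarrow> nat \<Rightarrow> real) \<Rightarrow> (nat \<Rightarrow> real) \<Rightarrow> nat \<Rightarrow> (nat \<Rightarrow> nat) \<Rightarrow> real" where
  "score_margin K m C Q Qt chat yt =
     class_score m C Q Qt yt chat - Max {class_score m C Q Qt yt c | c. c \<in> {1..K} \<and> c \<noteq> chat}"

definition certifiably_robust :: "nat \<Rightarrow> nat \<Rightarrow> real \<Rightarrow> (nat \<Rightarrow> nat \<Rightarrow> real) \<Rightarrow> (nat \<Rightarrow> real) \<Rightarrow> real \<Rightarrow> (nat \<Rightarrow> nat) \<Rightarrow> nat \<Rightarrow> bool" where
  "certifiably_robust K m C Q Qt \<epsilon> y chat \<longleftrightarrow>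
     (\<forall>yt\<in>adv_set K m \<epsilon> y. score_margin K m C Q Qt chat yt > 0)"

definition milp_feasible ::
  "nat \<Rightarrow> nat \<Rightarrow> real \<Rightarrow> (nat \<Rightarrow> nat \<Rightarrow> real) \<Rightarrow> (nat \<Rightarrow> real) \<Rightarrow> real \<Rightarrow> (nat \<Rightarrow> nat) \<Rightarrow> nat \<Rightarrow>
   real \<Rightarrow> (nat \<Rightarrow> real) \<Rightarrow> (nat \<Rightarrow> real) \<Rightarrow>
   (nat \<Rightarrow> nat \<Rightarrow> real) \<Rightarrow> (nat \<Rightarrow> nat \<Rightarrow> real) \<Rightarrow> (nat \<Rightarrow> nat \<Rightarrow> real) \<Rightarrow> (nat \<Rightarrow> nat \<Rightarrow> real) \<Rightarrow>
   (nat \<Rightarrow> nat \<Rightarrow> real) \<Rightarrow> (nat \<Rightarrow> nat \<Rightarrow> real) \<Rightarrow> (nat \<Rightarrow> nat \<Rightarrow> real) \<Rightarrow> (nat \<Rightarrow> nat \<Rightarrow> real) \<Rightarrow>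
   (nat \<Rightarrow> nat \<Rightarrow> nat \<Rightarrow> real) \<Rightarrow> bool" where
  "milp_feasible K m C Q Qt \<epsilon> y chat pstar p b \<alpha> yt z u v yt' s t R \<longleftrightarrow>
    (let pU = C * (\<Sum>i=1..m. \<bar>Qt i\<bar>); pL = - C * (\<Sum>i=1..m. \<bar>Qt i\<bar>);
         Mu = (\<lambda>i. (\<Sum>j=1..m. C * \<bar>Q i j\<bar>) - 1);
         Mv = (\<lambda>i. (\<Sum>j=1..m. C * \<bar>Q i j\<bar>) + 1) in
     (\<forall>c\<in>{1..K}. c \<noteq> chat \<longrightarrow> b c \<in> {0,1}) \<and>
     (\<forall>c\<in>{1..K}. \<forall>i\<in>{1..m}. yt' c i \<in> {0,1} \<and> s c i \<in> {0,1} \<and> t c i \<in> {0,1}) \<and>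
     (\<Sum>i=1..m. 1 - (\<Sum>c=1..K. onehot_label y c i * yt' c i)) \<le> real (nat \<lfloor>\<epsilon> * real m\<rfloor>) \<and>
     (\<forall>i\<in>{1..m}. (\<Sum>c=1..K. yt' c i) = 1) \<and>
     (\<Sum>c\<in>{1..K} - {chat}. b c) = 1 \<and>
     (\<forall>c\<in>{1..K}. c \<noteq> chat \<longrightarrow> pstar \<ge> p c \<and> pstar \<le> p c + (1 - b c) * (pU - pL)) \<and>
     (\<forall>c\<in>{1..K}. p c = (\<Sum>i=1..m. z c i * Qt i)) \<and>
     (\<forall>c\<in>{1..K}. \<forall>i\<in>{1..m}.
        (\<Sum>j=1..m. R c i j * Q i j) - 1 - u c i + v c i = 0 \<and>
        (\<forall>j\<in>{1..m}.
           - C * (1 + yt c i) \<le> R c i j + z c j \<and> R c i j + z c j \<le> C * (1 + yt c i) \<and>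
           - C * (1 - yt c i) \<le> R c i j - z c j \<and> R c i j - z c j \<le> C * (1 - yt c i)) \<and>
        - \<alpha> c i \<le> z c i \<and> z c i \<le> \<alpha> c i \<and>
        \<alpha> c i - C * (1 - yt c i) \<le> z c i \<and> z c i \<le> C * (1 + yt c i) - \<alpha> c i \<and>
        u c i \<le> Mu i * s c i \<and> \<alpha> c i \<le> C * (1 - s c i) \<and>
        v c i \<le> Mv i * t c i \<and> \<alpha> c i \<ge> C * t c i \<and>
        u c i \<ge> 0 \<and> v c i \<ge> 0 \<and>
        yt c i = 2 * yt' c i - 1))"

definition milp_values :: "nat \<Rightarrow> nat \<Rightarrow> real \<Rightarrow> (nat \<Rightarrow> nat \<Rightarrow> real) \<Rightarrow> (nat \<Rightarrow> real) \<Rightarrow> real \<Rightarrow> (nat \<Rightarrow> nat) \<Rightarrow> nat \<Rightarrow> real set" where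
  "milp_values K m C Q Qt \<epsilon> y chat = {p chat - pstar | pstar p b \<alpha> yt z u v yt' s t R.
      milp_feasible K m C Q Qt \<epsilon> y chat pstar p b \<alpha> yt z u v yt' s t R}"

end

theory Submission imports Defs "HOL-Analysis.Analysis" begin


definition qf :: "nat \<Rightarrow> (nat \<Rightarrow> nat \<Rightarrow> real) \<Rightarrow> (nat \<Rightarrow> real) \<Rightarrow> real" where
  "qf m Q x = (\<Sum>i=1..m. \<Sum>j=1..m. x i * x j * Q i j)"

definition gradv :: "nat \<Rightarrow> (nat \<Rightarrow> nat \<Rightarrow> real) \<Rightarrow> (nat \<Rightarrow> real) \<Rightarrow> (nat \<Rightarrow> real) \<Rightarrow> nat \<Rightarrow> real" where
  "gradv m Q w \<alpha> i = (\<Sum>j=1..m. w i * w j * \<alpha> j * Q i j) - 1"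

lemma qf_add:
  assumes sym: "\<forall>i\<in>{1..m}. \<forall>j\<in>{1..m}. Q i j = Q j i"
  shows "qf m Q (\<lambda>i. a i + d i) = qf m Q a + 2 * (\<Sum>i=1..m. \<Sum>j=1..m. d i * a j * Q i j) + qf m Q d"
proof -
  have s1: "(\<Sum>i=1..m. \<Sum>j=1..m. a i * d j * Q i j) = (\<Sum>i=1..m. \<Sum>j=1..m. d i * a j * Q i j)"
  proof -
    have "(\<Sum>i=1..m. \<Sum>j=1..m. a i * d j * Q i j) = (\<Sum>j=1..m. \<Sum>i=1..m. a i * d j * Q i j)"
      by (rule sum.swap)
    also have "\<dots> = (\<Sum>i=1..m. \<Sum>j=1..m. d i * a j * Q i j)"
      using sym by (intro sum.cong refl) (auto simp: mult.commute)
    finally show ?thesis .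
  qed
  have "qf m Q (\<lambda>i. a i + d i) = (\<Sum>i=1..m. \<Sum>j=1..m. a i * a j * Q i j + a i * d j * Q i j + d i * a j * Q i j + d i * d j * Q i j)"
    unfolding qf_def by (intro sum.cong refl) (simp add: algebra_simps)
  also have "\<dots> = qf m Q a + (\<Sum>i=1..m. \<Sum>j=1..m. a i * d j * Q i j) + (\<Sum>i=1..m. \<Sum>j=1..m. d i * a j * Q i j) + qf m Q d"
    unfolding qf_def by (simp add: sum.distrib)
  finally show ?thesis using s1 by simp
qed

lemma obj_qf:
  "svm_dual_obj m Q w \<alpha> = - (\<Sum>i=1..m. \<alpha> i) + 1/2 * qf m Q (\<lambda>i. w i * \<alpha> i)"
  unfolding svm_dual_obj_def qf_def by (simp add: algebra_simps)

lemma obj_expand: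
  assumes sym: "\<forall>i\<in>{1..m}. \<forall>j\<in>{1..m}. Q i j = Q j i"
  shows "svm_dual_obj m Q w \<beta> - svm_dual_obj m Q w \<alpha>
     = (\<Sum>i=1..m. gradv m Q w \<alpha> i * (\<beta> i - \<alpha> i)) + 1/2 * qf m Q (\<lambda>i. w i * (\<beta> i - \<alpha> i))"
proof -
  define a where "a = (\<lambda>i. w i * \<alpha> i)"
  define d where "d = (\<lambda>i. w i * (\<beta> i - \<alpha> i))"
  have wb: "(\<lambda>i. w i * \<beta> i) = (\<lambda>i. a i + d i)" unfolding a_def d_def by (auto simp: algebra_simps)
  have g: "(\<Sum>i=1..m. gradv m Q w \<alpha> i * (\<beta> i - \<alpha> i))
      = (\<Sum>i=1..m. \<Sum>j=1..m. d i * a j * Q i j) - (\<Sum>i=1..m. \<beta> i) + (\<Sum>i=1..m. \<alpha> i)"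
  proof -
    have "(\<Sum>i=1..m. gradv m Q w \<alpha> i * (\<beta> i - \<alpha> i))
        = (\<Sum>i=1..m. (\<Sum>j=1..m. d i * a j * Q i j) - (\<beta> i - \<alpha> i))"
      unfolding gradv_def a_def d_def
      by (intro sum.cong refl) (simp add: sum_distrib_left sum_distrib_right algebra_simps sum_subtractf)
    also have "\<dots> = (\<Sum>i=1..m. \<Sum>j=1..m. d i * a j * Q i j) - (\<Sum>i=1..m. \<beta> i) + (\<Sum>i=1..m. \<alpha> i)"
      by (simp add: sum_subtractf)
    finally show ?thesis .
  qed
  show ?thesis
    unfolding obj_qf wb a_def[symmetric] d_def[symmetric] g qf_add[OF sym] by (simp add: algebra_simps)
qed

lemma obj_cong: "(\<And>i. i\<in>{1..m} \<Longrightarrow> \<alpha> i = \<beta> i) \<Longrightarrow> svm_dual_obj m Q w \<alpha> = svm_dual_obj m Q w \<beta>"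
proof -
  assume h: "\<And>i. i\<in>{1..m} \<Longrightarrow> \<alpha> i = \<beta> i"
  have "sum \<alpha> {1..m} = sum \<beta> {1..m}" using h by (rule sum.cong[OF refl])
  moreover have "(\<Sum>i=1..m. \<Sum>j=1..m. w i * w j * \<alpha> i * \<alpha> j * Q i j) = (\<Sum>i=1..m. \<Sum>j=1..m. w i * w j * \<beta> i * \<beta> j * Q i j)"
    using h by (intro sum.cong refl) auto
  ultimately show ?thesis unfolding svm_dual_obj_def by simp
qed

lemma qf_scale: "qf m Q (\<lambda>i. c * x i) = c * c * qf m Q x"
  unfolding qf_def by (simp add: sum_distrib_left algebra_simps)

lemma qf_single:
  assumes i: "i \<in> {1..m}"
  shows "qf m Q (\<lambda>k. if k = i then c else 0) = c * c * Q i i"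
proof -
  define x where "x = (\<lambda>k::nat. if k = i then c else (0::real))"
  have inner: "(\<Sum>j=1..m. x ia * x j * Q ia j) = x ia * c * Q ia i" for ia
  proof -
    have "(\<Sum>j=1..m. x ia * x j * Q ia j) = (\<Sum>j=1..m. if j = i then x ia * c * Q ia j else 0)"
      by (rule sum.cong) (auto simp: x_def)
    also have "\<dots> = x ia * c * Q ia i" using i by (simp add: sum.delta')
    finally show ?thesis .
  qed
  have "qf m Q x = (\<Sum>ia=1..m. x ia * c * Q ia i)" unfolding qf_def inner ..
  also have "\<dots> = (\<Sum>ia=1..m. if ia = i then c * c * Q i i else 0)"
    by (rule sum.cong) (auto simp: x_def)
  also have "\<dots> = c * c * Q i i" using i by (simp add: sum.delta')
  finally show ?thesis unfolding x_def .
qed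

lemma kkt_suff:
  assumes sym: "\<forall>i\<in>{1..m}. \<forall>j\<in>{1..m}. Q i j = Q j i"
    and psd: "\<forall>x. 0 \<le> qf m Q x"
    and fe: "svm_dual_feasible m C \<alpha>"
    and kkt: "\<forall>i\<in>{1..m}. (gradv m Q w \<alpha> i > 0 \<longrightarrow> \<alpha> i = 0) \<and> (gradv m Q w \<alpha> i < 0 \<longrightarrow> \<alpha> i = C)"
  shows "\<alpha> \<in> svm_opt_set m C Q w"
  unfolding svm_opt_set_def
proof (intro CollectI conjI allI impI fe)
  fix \<beta> assume fb: "svm_dual_feasible m C \<beta>"
  have "0 \<le> (\<Sum>i=1..m. gradv m Q w \<alpha> i * (\<beta> i - \<alpha> i))"
  proof (rule sum_nonneg)
    fix i assume i: "i \<in> {1..m}"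
    show "0 \<le> gradv m Q w \<alpha> i * (\<beta> i - \<alpha> i)"
      using kkt[rule_format, OF i] fb i unfolding svm_dual_feasible_def
      by (cases "gradv m Q w \<alpha> i > 0"; cases "gradv m Q w \<alpha> i < 0") (auto simp: mult_nonpos_nonpos)
  qed
  with psd[rule_format, of "\<lambda>i. w i * (\<beta> i - \<alpha> i)"] obj_expand[OF sym, of w \<beta> \<alpha>]
  show "svm_dual_obj m Q w \<alpha> \<le> svm_dual_obj m Q w \<beta>" by linarith
qed

lemma aux_pos:
  fixes g a q :: real
  assumes "g > 0" "a > 0" "\<forall>h. 0 < h \<longrightarrow> h \<le> a \<longrightarrow> 0 \<le> - h * g + 1/2 * h * h * q"
  shows False
proof -
  define h where "h = min a (g / (\<bar>q\<bar> + 1))"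
  have hp: "0 < h" "h \<le> a" using assms unfolding h_def by auto
  have "h * \<bar>q\<bar> < g"
  proof -
    have "h * \<bar>q\<bar> \<le> g / (\<bar>q\<bar> + 1) * \<bar>q\<bar>" unfolding h_def by (intro mult_right_mono) auto
    also have "\<dots> < g" using assms(1) by (simp add: field_simps)
    finally show ?thesis .
  qed
  moreover have "h * q \<le> h * \<bar>q\<bar>" using hp(1) by (simp add: mult_left_mono)
  ultimately have "h * q < g" by linarith
  hence "h * (h * q) < h * g" using hp(1) by (rule mult_strict_left_mono)
  hence "- h * g + 1/2 * h * h * q < 0" using hp assms(1) by (simp add: algebra_simps)
  with assms(3) hp show False by fastforce
qed

lemma aux_zero:
  fixes q s :: real
  assumes "\<forall>x0. 0 \<le> x0 * x0 * q + 2 * x0 * s"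
  shows "s = 0"
proof (rule ccontr)
  assume s: "s \<noteq> 0"
  define x0 where "x0 = - s / (\<bar>q\<bar> + 1)"
  define t where "t = \<bar>q\<bar> + 1"
  have pos: "t > 0" unfolding t_def by simp
  have "x0 * x0 * q + 2 * x0 * s = s * s / (t * t) * (q - 2 * t)"
    unfolding x0_def t_def[symmetric] using pos by (simp add: field_simps)
  also have "\<dots> < 0"
  proof (rule mult_pos_neg)
    have "0 < s * s" using s by (auto simp: zero_less_mult_iff linorder_neq_iff)
    moreover have "0 < t * t" using pos by simp
    ultimately show "0 < s * s / (t * t)" by (rule divide_pos_pos)
    show "q - 2 * t < 0" unfolding t_def by (cases "q \<ge> 0") auto
  qed
  finally show False using assms by (metis not_le)
qed

lemma feas_upd: "svm_dual_feasible m C \<alpha> \<Longrightarrow> 0 \<le> v \<Longrightarrow> v \<le> C \<Longrightarrow> svm_dual_feasible m C (\<alpha>(i := v))"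
  unfolding svm_dual_feasible_def by auto

lemma obj_upd:
  assumes sym: "\<forall>i\<in>{1..m}. \<forall>j\<in>{1..m}. Q i j = Q j i" and i: "i \<in> {1..m}" and w: "w i * w i = 1"
  shows "svm_dual_obj m Q w (\<alpha>(i := \<alpha> i + h)) - svm_dual_obj m Q w \<alpha>
     = h * gradv m Q w \<alpha> i + 1/2 * h * h * Q i i"
proof -
  have d: "(\<lambda>k. (\<alpha>(i := \<alpha> i + h)) k - \<alpha> k) = (\<lambda>k. if k = i then h else 0)" by auto
  have wd: "(\<lambda>k. w k * (if k = i then h else 0)) = (\<lambda>k. if k = i then w i * h else 0)" by auto
  have "(\<Sum>k=1..m. gradv m Q w \<alpha> k * (if k = i then h else 0)) = (\<Sum>k=1..m. if k = i then h * gradv m Q w \<alpha> i else 0)"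
    by (rule sum.cong) auto
  also have "\<dots> = h * gradv m Q w \<alpha> i" using i by (simp add: sum.delta')
  finally have s1: "(\<Sum>k=1..m. gradv m Q w \<alpha> k * (if k = i then h else 0)) = h * gradv m Q w \<alpha> i" .
  have s2: "qf m Q (\<lambda>k. w k * (if k = i then h else 0)) = h * h * Q i i"
    unfolding wd qf_single[OF i] using w by (simp add: algebra_simps)
  have d': "\<And>k. (\<alpha>(i := \<alpha> i + h)) k - \<alpha> k = (if k = i then h else 0)" by auto
  have "svm_dual_obj m Q w (\<alpha>(i := \<alpha> i + h)) - svm_dual_obj m Q w \<alpha>
     = (\<Sum>k=1..m. gradv m Q w \<alpha> k * (if k = i then h else 0)) + 1/2 * qf m Q (\<lambda>k. w k * (if k = i then h else 0))"
    using obj_expand[OF sym, of w "\<alpha>(i := \<alpha> i + h)" \<alpha>] by (simp only: d')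
  then show ?thesis unfolding s1 s2 by simp
qed

lemma kkt_nec:
  assumes sym: "\<forall>i\<in>{1..m}. \<forall>j\<in>{1..m}. Q i j = Q j i"
    and opt: "\<alpha> \<in> svm_opt_set m C Q w" and i: "i \<in> {1..m}" and w: "w i * w i = 1"
  shows "(gradv m Q w \<alpha> i > 0 \<longrightarrow> \<alpha> i = 0) \<and> (gradv m Q w \<alpha> i < 0 \<longrightarrow> \<alpha> i = C)"
proof -
  have fa: "svm_dual_feasible m C \<alpha>" and mn: "\<And>\<beta>. svm_dual_feasible m C \<beta> \<Longrightarrow> svm_dual_obj m Q w \<alpha> \<le> svm_dual_obj m Q w \<beta>"
    using opt unfolding svm_opt_set_def by auto
  have ai: "0 \<le> \<alpha> i" "\<alpha> i \<le> C" using fa i unfolding svm_dual_feasible_def by auto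
  have key: "0 \<le> h * gradv m Q w \<alpha> i + 1/2 * h * h * Q i i" if "0 \<le> \<alpha> i + h" "\<alpha> i + h \<le> C" for h
    using mn[OF feas_upd[where i=i, OF fa that]] obj_upd[where w=w and i=i and \<alpha>=\<alpha> and h=h, OF sym i w] by linarith
  show ?thesis
  proof (intro conjI impI)
    assume g: "gradv m Q w \<alpha> i > 0"
    show "\<alpha> i = 0"
    proof (rule ccontr)
      assume "\<alpha> i \<noteq> 0"
      hence "\<alpha> i > 0" using ai by simp
      moreover have "\<forall>h. 0 < h \<longrightarrow> h \<le> \<alpha> i \<longrightarrow> 0 \<le> - h * gradv m Q w \<alpha> i + 1/2 * h * h * Q i i"
        using key[of "-h" for h] ai by auto
      ultimately show False using aux_pos[OF g] by blast
    qed
  next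
    assume g: "gradv m Q w \<alpha> i < 0"
    show "\<alpha> i = C"
    proof (rule ccontr)
      assume "\<alpha> i \<noteq> C"
      hence "C - \<alpha> i > 0" using ai by simp
      moreover have "\<forall>h. 0 < h \<longrightarrow> h \<le> C - \<alpha> i \<longrightarrow> 0 \<le> - h * (- gradv m Q w \<alpha> i) + 1/2 * h * h * Q i i"
        using key ai by auto
      moreover have "- gradv m Q w \<alpha> i > 0" using g by simp
      ultimately show False using aux_pos by blast
    qed
  qed
qed

lemma uniq:
  assumes sym: "\<forall>i\<in>{1..m}. \<forall>j\<in>{1..m}. Q i j = Q j i"
    and ext: "\<forall>x x0. 0 \<le> x0 * x0 * Qtt + 2 * x0 * (\<Sum>i=1..m. x i * Qt i) + qf m Q x"
    and oa: "\<alpha> \<in> svm_opt_set m C Q w" and ob: "\<beta> \<in> svm_opt_set m C Q w"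
  shows "(\<Sum>i=1..m. w i * \<alpha> i * Qt i) = (\<Sum>i=1..m. w i * \<beta> i * Qt i)"
proof -
  have fa: "svm_dual_feasible m C \<alpha>" and ma: "\<And>\<gamma>. svm_dual_feasible m C \<gamma> \<Longrightarrow> svm_dual_obj m Q w \<alpha> \<le> svm_dual_obj m Q w \<gamma>"
    using oa unfolding svm_opt_set_def by auto
  have fb: "svm_dual_feasible m C \<beta>" and mb: "\<And>\<gamma>. svm_dual_feasible m C \<gamma> \<Longrightarrow> svm_dual_obj m Q w \<beta> \<le> svm_dual_obj m Q w \<gamma>"
    using ob unfolding svm_opt_set_def by auto
  define d where "d = (\<lambda>i. w i * (\<beta> i - \<alpha> i))"
  define S where "S = (\<Sum>i=1..m. gradv m Q w \<alpha> i * (\<beta> i - \<alpha> i))"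
  define \<gamma> where "\<gamma> = (\<lambda>i. (\<alpha> i + \<beta> i) / 2)"
  have fg: "svm_dual_feasible m C \<gamma>" unfolding svm_dual_feasible_def
  proof
    fix i assume "i \<in> {1..m}"
    then have "0 \<le> \<alpha> i" "\<alpha> i \<le> C" "0 \<le> \<beta> i" "\<beta> i \<le> C" using fa fb unfolding svm_dual_feasible_def by auto
    then show "0 \<le> \<gamma> i \<and> \<gamma> i \<le> C" unfolding \<gamma>_def by auto
  qed
  have e1: "svm_dual_obj m Q w \<beta> - svm_dual_obj m Q w \<alpha> = S + 1/2 * qf m Q d"
    unfolding S_def d_def by (rule obj_expand[OF sym])
  have e2: "svm_dual_obj m Q w \<gamma> - svm_dual_obj m Q w \<alpha> = 1/2 * S + 1/8 * qf m Q d"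
  proof -
    have "(\<Sum>i=1..m. gradv m Q w \<alpha> i * (\<gamma> i - \<alpha> i)) = (\<Sum>i=1..m. 1/2 * (gradv m Q w \<alpha> i * (\<beta> i - \<alpha> i)))"
      by (rule sum.cong) (auto simp: \<gamma>_def field_simps)
    also have "\<dots> = 1/2 * S" unfolding S_def by (simp add: sum_distrib_left)
    finally have a: "(\<Sum>i=1..m. gradv m Q w \<alpha> i * (\<gamma> i - \<alpha> i)) = 1/2 * S" .
    have "(\<lambda>i. w i * (\<gamma> i - \<alpha> i)) = (\<lambda>i. 1/2 * d i)" unfolding \<gamma>_def d_def by (auto simp: field_simps)
    hence b: "qf m Q (\<lambda>i. w i * (\<gamma> i - \<alpha> i)) = 1/4 * qf m Q d" by (simp only: qf_scale)
    show ?thesis unfolding obj_expand[OF sym] a b by simp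
  qed
  have "svm_dual_obj m Q w \<alpha> = svm_dual_obj m Q w \<beta>" using ma[OF fb] mb[OF fa] by simp
  moreover have "svm_dual_obj m Q w \<alpha> \<le> svm_dual_obj m Q w \<gamma>" using ma[OF fg] .
  moreover have "0 \<le> qf m Q d" using ext[rule_format, of 0 d] by simp
  ultimately have q0: "qf m Q d = 0" using e1 e2 by linarith
  have "\<forall>x0. 0 \<le> x0 * x0 * Qtt + 2 * x0 * (\<Sum>i=1..m. d i * Qt i)" using ext[rule_format, of _ d] q0 by simp
  hence z: "(\<Sum>i=1..m. d i * Qt i) = 0" by (rule aux_zero)
  have "(\<Sum>i=1..m. w i * \<beta> i * Qt i) - (\<Sum>i=1..m. w i * \<alpha> i * Qt i) = (\<Sum>i=1..m. d i * Qt i)"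
    unfolding d_def by (simp add: sum_subtractf[symmetric] algebra_simps)
  with z show ?thesis by simp
qed

lemma exists_opt:
  assumes C: "0 \<le> C"
  shows "\<exists>\<alpha>. \<alpha> \<in> svm_opt_set m C Q w"
proof -
  let ?T = "product_topology (\<lambda>_. euclideanreal) {1..m}"
  let ?S = "PiE {1..m} (\<lambda>_. {0..C})"
  have cS: "compactin ?T ?S" by (simp add: compactin_PiE)
  have cont: "continuous_map ?T euclideanreal (svm_dual_obj m Q w)"
    unfolding svm_dual_obj_def
    by (intro continuous_intros continuous_map_product_projection) auto
  have "compactin euclideanreal (svm_dual_obj m Q w ` ?S)" by (rule image_compactin[OF cS cont])
  hence comp: "compact (svm_dual_obj m Q w ` ?S)" by simp
  have ne: "(\<lambda>i\<in>{1..m}. 0) \<in> ?S" using C by auto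
  obtain v where v: "v \<in> svm_dual_obj m Q w ` ?S" "\<forall>t \<in> svm_dual_obj m Q w ` ?S. v \<le> t"
    using compact_attains_inf[OF comp] ne by blast
  then obtain \<alpha>0 where a0: "\<alpha>0 \<in> ?S" "v = svm_dual_obj m Q w \<alpha>0" by blast
  define \<alpha> where "\<alpha> = (\<lambda>i. if i \<in> {1..m} then \<alpha>0 i else 0)"
  have "svm_dual_obj m Q w \<alpha> = svm_dual_obj m Q w \<alpha>0" by (rule obj_cong) (simp add: \<alpha>_def)
  have "\<alpha> \<in> svm_opt_set m C Q w"
    unfolding svm_opt_set_def
  proof (intro CollectI conjI allI impI)
    show "svm_dual_feasible m C \<alpha>" using a0(1) unfolding svm_dual_feasible_def \<alpha>_def by auto
    fix \<beta> assume fb: "svm_dual_feasible m C \<beta>"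
    let ?b = "restrict \<beta> {1..m}"
    have "?b \<in> ?S" using fb unfolding svm_dual_feasible_def by auto
    hence "v \<le> svm_dual_obj m Q w ?b" using v(2) by blast
    moreover have "svm_dual_obj m Q w ?b = svm_dual_obj m Q w \<beta>" by (rule obj_cong) simp
    moreover have "svm_dual_obj m Q w \<alpha> = svm_dual_obj m Q w \<alpha>0" by (rule obj_cong) (simp add: \<alpha>_def)
    ultimately show "svm_dual_obj m Q w \<alpha> \<le> svm_dual_obj m Q w \<beta>" using a0(2) by simp
  qed
  thus ?thesis by blast
qed

lemma bin_sq [simp]: "bin_label L c i * bin_label L c i = 1"
  unfolding bin_label_def by simp

lemma bin_abs [simp]: "\<bar>bin_label L c i\<bar> = 1"
  unfolding bin_label_def by simp

lemma onehot_sum: "L i \<in> {1..K} \<Longrightarrow> (\<Sum>c=1..K. onehot_label L c i) = 1"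
  unfolding onehot_label_def by (simp add: sum.delta sum.delta')

lemma match_sum:
  assumes "y i \<in> {1..K}"
  shows "(\<Sum>c=1..K. onehot_label y c i * onehot_label L c i) = (if L i = y i then 1 else 0)"
proof -
  have "(\<Sum>c=1..K. onehot_label y c i * onehot_label L c i) = (\<Sum>c=1..K. if y i = c then onehot_label L c i else 0)"
    by (rule sum.cong) (auto simp: onehot_label_def)
  also have "\<dots> = onehot_label L (y i) i" using assms by (simp add: sum.delta')
  finally show ?thesis by (simp add: onehot_label_def)
qed

lemma sum_ind_card: "finite S \<Longrightarrow> (\<Sum>i\<in>S. if P i then 1 else 0::real) = real (card {i\<in>S. P i})"
  by (simp add: sum.inter_filter[symmetric])

lemma budget_card:
  assumes "\<forall>i\<in>{1..m}. y i \<in> {1..K}"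
  shows "(\<Sum>i=1..m. 1 - (\<Sum>c=1..K. onehot_label y c i * onehot_label L c i)) = real (card {i\<in>{1..m}. L i \<noteq> y i})"
proof -
  have "(\<Sum>i=1..m. 1 - (\<Sum>c=1..K. onehot_label y c i * onehot_label L c i)) = (\<Sum>i=1..m. if L i \<noteq> y i then 1 else 0::real)"
    by (rule sum.cong) (use assms match_sum in auto)
  also have "\<dots> = real (card {i\<in>{1..m}. L i \<noteq> y i})" by (rule sum_ind_card) simp
  finally show ?thesis .
qed

lemma unique_class:
  fixes f :: "nat \<Rightarrow> real"
  assumes f01: "\<forall>c\<in>{1..K}. f c \<in> {0,1}" and s: "(\<Sum>c=1..K. f c) = 1"
  shows "\<exists>c0\<in>{1..K}. \<forall>c\<in>{1..K}. f c = (if c = c0 then 1 else 0)"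
proof -
  have "(\<Sum>c=1..K. f c) = (\<Sum>c=1..K. if f c = 1 then 1 else 0)"
    by (rule sum.cong) (use f01 in auto)
  also have "\<dots> = real (card {c\<in>{1..K}. f c = 1})" by (rule sum_ind_card) simp
  finally have "card {c\<in>{1..K}. f c = 1} = 1" using s by simp
  then obtain c0 where c0: "{c\<in>{1..K}. f c = 1} = {c0}" by (rule card_1_singletonE)
  hence "c0 \<in> {1..K}" by auto
  moreover have "\<forall>c\<in>{1..K}. f c = (if c = c0 then 1 else 0)"
  proof
    fix c assume c: "c \<in> {1..K}"
    show "f c = (if c = c0 then 1 else 0)"
      using c0 c f01 by (cases "c = c0") auto
  qed
  ultimately show ?thesis by blast
qed

lemma bound_p:
  assumes fe: "svm_dual_feasible m C \<alpha>" and w: "\<forall>i. \<bar>w i\<bar> = 1"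
  shows "\<bar>\<Sum>i=1..m. w i * \<alpha> i * Qt i\<bar> \<le> C * (\<Sum>i=1..m. \<bar>Qt i\<bar>)"
proof -
  have "\<bar>\<Sum>i=1..m. w i * \<alpha> i * Qt i\<bar> \<le> (\<Sum>i=1..m. \<bar>w i * \<alpha> i * Qt i\<bar>)" by (rule sum_abs)
  also have "\<dots> \<le> (\<Sum>i=1..m. C * \<bar>Qt i\<bar>)"
  proof (rule sum_mono)
    fix i assume "i \<in> {1..m}"
    hence "0 \<le> \<alpha> i" "\<alpha> i \<le> C" using fe unfolding svm_dual_feasible_def by auto
    thus "\<bar>w i * \<alpha> i * Qt i\<bar> \<le> C * \<bar>Qt i\<bar>" using w by (simp add: abs_mult mult_right_mono)
  qed
  finally show ?thesis by (simp add: sum_distrib_left)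
qed

lemma bound_g:
  assumes fe: "svm_dual_feasible m C \<alpha>" and w: "\<forall>i. \<bar>w i\<bar> = 1"
  shows "\<bar>\<Sum>j=1..m. w i * w j * \<alpha> j * Q i j\<bar> \<le> (\<Sum>j=1..m. C * \<bar>Q i j\<bar>)"
proof -
  have "\<bar>\<Sum>j=1..m. w i * w j * \<alpha> j * Q i j\<bar> \<le> (\<Sum>j=1..m. \<bar>w i * w j * \<alpha> j * Q i j\<bar>)" by (rule sum_abs)
  also have "\<dots> \<le> (\<Sum>j=1..m. C * \<bar>Q i j\<bar>)"
  proof (rule sum_mono)
    fix j assume "j \<in> {1..m}"
    hence "0 \<le> \<alpha> j" "\<alpha> j \<le> C" using fe unfolding svm_dual_feasible_def by auto
    thus "\<bar>w i * w j * \<alpha> j * Q i j\<bar> \<le> C * \<bar>Q i j\<bar>" using w by (simp add: abs_mult mult_right_mono)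
  qed
  finally show ?thesis .
qed



context
  fixes K m :: nat and C \<epsilon> :: real and y :: "nat \<Rightarrow> nat"
    and Q :: "nat \<Rightarrow> nat \<Rightarrow> real" and Qt :: "nat \<Rightarrow> real" and chat :: nat and Qtt :: real
  assumes K2: "K \<ge> 2" and Cpos: "C > 0"
    and yK: "\<forall>i\<in>{1..m}. y i \<in> {1..K}"
    and sym: "\<forall>i\<in>{1..m}. \<forall>j\<in>{1..m}. Q i j = Q j i"
    and ext: "\<forall>x x0. 0 \<le> x0 * x0 * Qtt + 2 * x0 * (\<Sum>i=1..m. x i * Qt i) + qf m Q x"
    and chat: "chat \<in> {1..K}"
begin

lemma psd: "\<forall>x. 0 \<le> qf m Q x"
proof
  fix x show "0 \<le> qf m Q x" using ext[rule_format, of 0 x] by simp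
qed

lemma opt_ex: "\<exists>\<alpha>. \<alpha> \<in> svm_opt_set m C Q w"
  using exists_opt Cpos by simp

lemma score_eq:
  assumes "\<alpha> \<in> svm_opt_set m C Q (bin_label L c)"
  shows "class_score m C Q Qt L c = (\<Sum>i=1..m. bin_label L c i * \<alpha> i * Qt i)"
proof -
  have "(SOME \<alpha>. \<alpha> \<in> svm_opt_set m C Q (bin_label L c)) \<in> svm_opt_set m C Q (bin_label L c)"
    using opt_ex by (rule someI_ex)
  then show ?thesis unfolding class_score_def Let_def using uniq[OF sym ext _ assms] by blast
qed

lemma milp_to_adv:
  assumes F: "milp_feasible K m C Q Qt \<epsilon> y chat pstar p b \<alpha> yt z u v yt' s t R"
  shows "\<exists>L\<in>adv_set K m \<epsilon> y. p chat - pstar = score_margin K m C Q Qt chat L"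
proof -
  note F' = F[simplified milp_feasible_def Let_def]
  have b01: "\<forall>c\<in>{1..K}. c \<noteq> chat \<longrightarrow> b c \<in> {0,1}"
    and y01: "\<forall>c\<in>{1..K}. \<forall>i\<in>{1..m}. yt' c i \<in> {0,1} \<and> s c i \<in> {0,1} \<and> t c i \<in> {0,1}"
    and bud: "(\<Sum>i=1..m. 1 - (\<Sum>c=1..K. onehot_label y c i * yt' c i)) \<le> real (nat \<lfloor>\<epsilon> * real m\<rfloor>)"
    and one: "\<forall>i\<in>{1..m}. (\<Sum>c=1..K. yt' c i) = 1"
    and bsum: "(\<Sum>c\<in>{1..K} - {chat}. b c) = 1"
    and pst: "\<forall>c\<in>{1..K}. c \<noteq> chat \<longrightarrow> pstar \<ge> p c \<and> pstar \<le> p c + (1 - b c) * (C * (\<Sum>i=1..m. \<bar>Qt i\<bar>) - - C * (\<Sum>i=1..m. \<bar>Qt i\<bar>))"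
    and pdef: "\<forall>c\<in>{1..K}. p c = (\<Sum>i=1..m. z c i * Qt i)"
    and per: "\<forall>c\<in>{1..K}. \<forall>i\<in>{1..m}.
        (\<Sum>j=1..m. R c i j * Q i j) - 1 - u c i + v c i = 0 \<and>
        (\<forall>j\<in>{1..m}.
           - C * (1 + yt c i) \<le> R c i j + z c j \<and> R c i j + z c j \<le> C * (1 + yt c i) \<and>
           - C * (1 - yt c i) \<le> R c i j - z c j \<and> R c i j - z c j \<le> C * (1 - yt c i)) \<and>
        - \<alpha> c i \<le> z c i \<and> z c i \<le> \<alpha> c i \<and>
        \<alpha> c i - C * (1 - yt c i) \<le> z c i \<and> z c i \<le> C * (1 + yt c i) - \<alpha> c i \<and>
        u c i \<le> ((\<Sum>j=1..m. C * \<bar>Q i j\<bar>) - 1) * s c i \<and> \<alpha> c i \<le> C * (1 - s c i) \<and>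
        v c i \<le> ((\<Sum>j=1..m. C * \<bar>Q i j\<bar>) + 1) * t c i \<and> \<alpha> c i \<ge> C * t c i \<and>
        u c i \<ge> 0 \<and> v c i \<ge> 0 \<and>
        yt c i = 2 * yt' c i - 1"
    using F' by blast+
  define L where "L = (\<lambda>i. if i \<in> {1..m} then (THE c. c \<in> {1..K} \<and> yt' c i = 1) else y i)"
  have ytL: "L i \<in> {1..K} \<and> (\<forall>c\<in>{1..K}. yt' c i = onehot_label L c i)" if i: "i \<in> {1..m}" for i
  proof -
    have f01: "\<forall>c\<in>{1..K}. yt' c i \<in> {0,1}" using y01 i by blast
    obtain c0 where c0: "c0 \<in> {1..K}" "\<forall>c\<in>{1..K}. yt' c i = (if c = c0 then 1 else 0)"
      using unique_class[OF f01 one[rule_format, OF i]] by blast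
    have "(THE c. c \<in> {1..K} \<and> yt' c i = 1) = c0"
      by (rule the_equality) (use c0 in \<open>auto split: if_splits\<close>)
    hence "L i = c0" using i unfolding L_def by simp
    thus ?thesis using c0 unfolding onehot_label_def by auto
  qed
  have ytb: "yt c i = bin_label L c i" if "c \<in> {1..K}" "i \<in> {1..m}" for c i
    using per that ytL[OF that(2)] unfolding bin_label_def onehot_label_def by auto
  have LA: "L \<in> adv_set K m \<epsilon> y"
  proof -
    have "(\<Sum>i=1..m. 1 - (\<Sum>c=1..K. onehot_label y c i * yt' c i))
        = (\<Sum>i=1..m. 1 - (\<Sum>c=1..K. onehot_label y c i * onehot_label L c i))"
      by (intro sum.cong refl arg_cong2[where f="(-)"]) (use ytL in auto)
    also have "\<dots> = real (card {i\<in>{1..m}. L i \<noteq> y i})" by (rule budget_card[OF yK])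
    finally have "card {i\<in>{1..m}. L i \<noteq> y i} \<le> nat \<lfloor>\<epsilon> * real m\<rfloor>" using bud by linarith
    thus ?thesis unfolding adv_set_def using ytL by (auto simp: L_def)
  qed
  have pc: "p c = class_score m C Q Qt L c" if c: "c \<in> {1..K}" for c
  proof -
    let ?w = "bin_label L c"
    have ai: "0 \<le> \<alpha> c i \<and> \<alpha> c i \<le> C" if "i \<in> {1..m}" for i
    proof -
      have "s c i \<in> {0,1}" "t c i \<in> {0,1}" using y01 c that by auto
      thus ?thesis using per[rule_format, OF c that] Cpos by auto
    qed
    have fe: "svm_dual_feasible m C (\<alpha> c)" unfolding svm_dual_feasible_def using ai by blast
    have zc: "z c i = ?w i * \<alpha> c i" if i: "i \<in> {1..m}" for i
      using per[rule_format, OF c i] ytb[OF c i] unfolding bin_label_def by (auto split: if_splits)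
    have Rc: "R c i j = ?w i * ?w j * \<alpha> c j" if i: "i \<in> {1..m}" and j: "j \<in> {1..m}" for i j
    proof -
      have "- C * (1 + yt c i) \<le> R c i j + z c j \<and> R c i j + z c j \<le> C * (1 + yt c i) \<and>
           - C * (1 - yt c i) \<le> R c i j - z c j \<and> R c i j - z c j \<le> C * (1 - yt c i)"
        using per[rule_format, OF c i] j by blast
      thus ?thesis using zc[OF j] ytb[OF c i] unfolding bin_label_def by (auto split: if_splits)
    qed
    have gc: "gradv m Q ?w (\<alpha> c) i = u c i - v c i" if i: "i \<in> {1..m}" for i
    proof -
      have "(\<Sum>j=1..m. ?w i * ?w j * \<alpha> c j * Q i j) = (\<Sum>j=1..m. R c i j * Q i j)"
        by (rule sum.cong) (use Rc i in auto)
      thus ?thesis unfolding gradv_def using per[rule_format, OF c i] by auto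
    qed
    have kkt: "\<forall>i\<in>{1..m}. (gradv m Q ?w (\<alpha> c) i > 0 \<longrightarrow> \<alpha> c i = 0) \<and> (gradv m Q ?w (\<alpha> c) i < 0 \<longrightarrow> \<alpha> c i = C)"
    proof (intro ballI conjI impI)
      fix i assume i: "i \<in> {1..m}"
      have st: "s c i \<in> {0,1}" "t c i \<in> {0,1}" using y01 c i by auto
      have P: "u c i \<le> ((\<Sum>j=1..m. C * \<bar>Q i j\<bar>) - 1) * s c i" "\<alpha> c i \<le> C * (1 - s c i)"
        "v c i \<le> ((\<Sum>j=1..m. C * \<bar>Q i j\<bar>) + 1) * t c i" "\<alpha> c i \<ge> C * t c i" "u c i \<ge> 0" "v c i \<ge> 0"
        using per[rule_format, OF c i] by blast+
      {
        assume "gradv m Q ?w (\<alpha> c) i > 0"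
        hence "u c i > 0" using gc[OF i] P by linarith
        hence "s c i = 1" using st P by auto
        thus "\<alpha> c i = 0" using P ai[OF i] by auto
      }
      {
        assume "gradv m Q ?w (\<alpha> c) i < 0"
        hence "v c i > 0" using gc[OF i] P by linarith
        hence "t c i = 1" using st P by auto
        thus "\<alpha> c i = C" using P ai[OF i] by auto
      }
    qed
    have opt: "\<alpha> c \<in> svm_opt_set m C Q ?w" by (rule kkt_suff[OF sym psd fe kkt])
    have "p c = (\<Sum>i=1..m. ?w i * \<alpha> c i * Qt i)"
      unfolding pdef[rule_format, OF c] by (rule sum.cong) (use zc in auto)
    thus ?thesis using score_eq[OF opt] by simp
  qed
  obtain c0 where c0: "c0 \<in> {1..K} - {chat}" "b c0 = 1"
  proof -
    have "\<exists>c0\<in>{1..K} - {chat}. b c0 \<noteq> 0"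
    proof (rule ccontr)
      assume "\<not> ?thesis"
      hence "(\<Sum>c\<in>{1..K} - {chat}. b c) = 0" by auto
      thus False using bsum by simp
    qed
    then obtain c0 where "c0 \<in> {1..K} - {chat}" "b c0 \<noteq> 0" by blast
    moreover have "b c0 = 1" using b01 calculation by auto
    ultimately show ?thesis using that by blast
  qed
  have pstar0: "pstar = p c0" using pst c0 by force
  have "Max {class_score m C Q Qt L c | c. c \<in> {1..K} \<and> c \<noteq> chat} = pstar"
  proof (rule Max_eqI)
    show "finite {class_score m C Q Qt L c | c. c \<in> {1..K} \<and> c \<noteq> chat}" by (rule finite_image_set) simp
    show "y \<le> pstar" if "y \<in> {class_score m C Q Qt L c | c. c \<in> {1..K} \<and> c \<noteq> chat}" for y
      using that pst pc by auto
    show "pstar \<in> {class_score m C Q Qt L c | c. c \<in> {1..K} \<and> c \<noteq> chat}"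
      using pstar0 pc c0 by auto
  qed
  hence "p chat - pstar = score_margin K m C Q Qt chat L"
    unfolding score_margin_def using pc[OF chat] by simp
  with LA show ?thesis by blast
qed

lemma adv_to_milp:
  assumes LA: "L \<in> adv_set K m \<epsilon> y"
  shows "score_margin K m C Q Qt chat L \<in> milp_values K m C Q Qt \<epsilon> y chat"
proof -
  have LK: "\<forall>i\<in>{1..m}. L i \<in> {1..K}" and Lcard: "card {i\<in>{1..m}. L i \<noteq> y i} \<le> nat \<lfloor>\<epsilon> * real m\<rfloor>"
    using LA unfolding adv_set_def by auto
  define \<alpha> where "\<alpha> = (\<lambda>c. SOME \<alpha>. \<alpha> \<in> svm_opt_set m C Q (bin_label L c))"
  define yt where "yt = (\<lambda>c i. bin_label L c i)"
  define yt' where "yt' = (\<lambda>c i. onehot_label L c i)"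
  define z where "z = (\<lambda>c i. bin_label L c i * \<alpha> c i)"
  define R where "R = (\<lambda>c i j. bin_label L c i * bin_label L c j * \<alpha> c j)"
  define g where "g = (\<lambda>c i. gradv m Q (bin_label L c) (\<alpha> c) i)"
  define u where "u = (\<lambda>c i. max (g c i) 0)"
  define v where "v = (\<lambda>c i. max (- g c i) 0)"
  define s where "s = (\<lambda>c i. if g c i > 0 then 1 else (0::real))"
  define t where "t = (\<lambda>c i. if g c i < 0 then 1 else (0::real))"
  define p where "p = (\<lambda>c. \<Sum>i=1..m. z c i * Qt i)"
  define S where "S = {c\<in>{1..K}. c \<noteq> chat}"
  have finS: "finite S" unfolding S_def by simp
  have neS: "S \<noteq> {}"
  proof -
    have "1 \<in> S \<or> 2 \<in> S" using K2 unfolding S_def by auto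
    thus ?thesis by auto
  qed
  have "Max (p ` S) \<in> p ` S" using finS neS by (intro Max_in) auto
  then obtain c0 where c0: "c0 \<in> S" "p c0 = Max (p ` S)" by auto
  have c0max: "\<forall>c\<in>S. p c \<le> p c0" using c0 finS by simp
  define pstar where "pstar = p c0"
  define b where "b = (\<lambda>c. if c = c0 then 1 else (0::real))"
  have oc: "\<alpha> c \<in> svm_opt_set m C Q (bin_label L c)" for c
    unfolding \<alpha>_def using opt_ex by (rule someI_ex)
  have fe: "svm_dual_feasible m C (\<alpha> c)" for c using oc[of c] unfolding svm_opt_set_def by auto
  have ai: "0 \<le> \<alpha> c i \<and> \<alpha> c i \<le> C" if "i \<in> {1..m}" for c i using fe[of c] that unfolding svm_dual_feasible_def by auto
  have kk: "(g c i > 0 \<longrightarrow> \<alpha> c i = 0) \<and> (g c i < 0 \<longrightarrow> \<alpha> c i = C)" if "i \<in> {1..m}" for c i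
    unfolding g_def by (rule kkt_nec[OF sym oc that bin_sq])
  have cs: "class_score m C Q Qt L c = p c" for c
    unfolding class_score_def Let_def p_def z_def \<alpha>_def ..
  have pbound: "\<bar>p c\<bar> \<le> C * (\<Sum>i=1..m. \<bar>Qt i\<bar>)" for c
    unfolding p_def z_def by (rule bound_p[OF fe]) simp
  have setS: "{p c | c. c \<in> {1..K} \<and> c \<noteq> chat} = p ` S"
    unfolding S_def by auto
  have marg: "score_margin K m C Q Qt chat L = p chat - pstar"
    unfolding score_margin_def cs setS pstar_def c0(2) ..
  have F1: "\<forall>c\<in>{1..K}. c \<noteq> chat \<longrightarrow> b c \<in> {0,1}" by (simp add: b_def)
  have F2: "\<forall>c\<in>{1..K}. \<forall>i\<in>{1..m}. yt' c i \<in> {0,1} \<and> s c i \<in> {0,1} \<and> t c i \<in> {0,1}"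
    by (simp add: yt'_def onehot_label_def s_def t_def)
  have F3: "(\<Sum>i=1..m. 1 - (\<Sum>c=1..K. onehot_label y c i * yt' c i)) \<le> real (nat \<lfloor>\<epsilon> * real m\<rfloor>)"
    unfolding yt'_def budget_card[OF yK] using Lcard by simp
  have F4: "\<forall>i\<in>{1..m}. (\<Sum>c=1..K. yt' c i) = 1"
    unfolding yt'_def using LK onehot_sum by blast
  have F5: "(\<Sum>c\<in>{1..K} - {chat}. b c) = 1"
  proof -
    have "c0 \<in> {1..K} - {chat}" using c0(1) unfolding S_def by auto
    thus ?thesis unfolding b_def by (simp add: sum.delta)
  qed
  have F6: "\<forall>c\<in>{1..K}. c \<noteq> chat \<longrightarrow> pstar \<ge> p c \<and> pstar \<le> p c + (1 - b c) * (C * (\<Sum>i=1..m. \<bar>Qt i\<bar>) - - C * (\<Sum>i=1..m. \<bar>Qt i\<bar>))"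
  proof (intro ballI impI conjI)
    fix c assume c: "c \<in> {1..K}" "c \<noteq> chat"
    hence "c \<in> S" unfolding S_def by auto
    thus "pstar \<ge> p c" using c0max unfolding pstar_def by blast
    show "pstar \<le> p c + (1 - b c) * (C * (\<Sum>i=1..m. \<bar>Qt i\<bar>) - - C * (\<Sum>i=1..m. \<bar>Qt i\<bar>))"
      using pbound[of c] pbound[of c0] unfolding pstar_def b_def by (cases "c = c0") (auto simp: abs_le_iff)
  qed
  have F7: "\<forall>c\<in>{1..K}. p c = (\<Sum>i=1..m. z c i * Qt i)" by (simp add: p_def)
  have F8: "\<forall>c\<in>{1..K}. \<forall>i\<in>{1..m}.
        (\<Sum>j=1..m. R c i j * Q i j) - 1 - u c i + v c i = 0 \<and>
        (\<forall>j\<in>{1..m}.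
           - C * (1 + yt c i) \<le> R c i j + z c j \<and> R c i j + z c j \<le> C * (1 + yt c i) \<and>
           - C * (1 - yt c i) \<le> R c i j - z c j \<and> R c i j - z c j \<le> C * (1 - yt c i)) \<and>
        - \<alpha> c i \<le> z c i \<and> z c i \<le> \<alpha> c i \<and>
        \<alpha> c i - C * (1 - yt c i) \<le> z c i \<and> z c i \<le> C * (1 + yt c i) - \<alpha> c i \<and>
        u c i \<le> ((\<Sum>j=1..m. C * \<bar>Q i j\<bar>) - 1) * s c i \<and> \<alpha> c i \<le> C * (1 - s c i) \<and>
        v c i \<le> ((\<Sum>j=1..m. C * \<bar>Q i j\<bar>) + 1) * t c i \<and> \<alpha> c i \<ge> C * t c i \<and>
        u c i \<ge> 0 \<and> v c i \<ge> 0 \<and>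
        yt c i = 2 * yt' c i - 1"
  proof (intro ballI)
    fix c i assume c: "c \<in> {1..K}" and i: "i \<in> {1..m}"
    have gi: "g c i = (\<Sum>j=1..m. R c i j * Q i j) - 1" unfolding g_def gradv_def R_def ..
    have gb: "\<bar>(\<Sum>j=1..m. R c i j * Q i j)\<bar> \<le> (\<Sum>j=1..m. C * \<bar>Q i j\<bar>)"
      unfolding R_def by (rule bound_g[OF fe]) simp
    note a = ai[OF i, of c] and k = kk[OF i, of c]
    have e1: "(\<Sum>j=1..m. R c i j * Q i j) - 1 - u c i + v c i = 0"
      unfolding u_def v_def gi by (simp add: max_def)
    have e2: "- \<alpha> c i \<le> z c i" "z c i \<le> \<alpha> c i" "\<alpha> c i - C * (1 - yt c i) \<le> z c i" "z c i \<le> C * (1 + yt c i) - \<alpha> c i"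
      using a unfolding z_def yt_def bin_label_def by auto
    have e3: "u c i \<le> ((\<Sum>j=1..m. C * \<bar>Q i j\<bar>) - 1) * s c i"
      using gb unfolding u_def s_def gi by (auto simp: abs_le_iff)
    have e4: "\<alpha> c i \<le> C * (1 - s c i)" using a k unfolding s_def by auto
    have e5: "v c i \<le> ((\<Sum>j=1..m. C * \<bar>Q i j\<bar>) + 1) * t c i"
      using gb unfolding v_def t_def gi by (auto simp: abs_le_iff)
    have e6: "\<alpha> c i \<ge> C * t c i" using a k unfolding t_def by auto
    have e7: "u c i \<ge> 0" "v c i \<ge> 0" unfolding u_def v_def by auto
    have e8: "yt c i = 2 * yt' c i - 1" unfolding yt_def yt'_def bin_label_def onehot_label_def by simp
    have e9: "\<forall>j\<in>{1..m}.
           - C * (1 + yt c i) \<le> R c i j + z c j \<and> R c i j + z c j \<le> C * (1 + yt c i) \<and>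
           - C * (1 - yt c i) \<le> R c i j - z c j \<and> R c i j - z c j \<le> C * (1 - yt c i)"
    proof
      fix j assume j: "j \<in> {1..m}"
      show "- C * (1 + yt c i) \<le> R c i j + z c j \<and> R c i j + z c j \<le> C * (1 + yt c i) \<and>
           - C * (1 - yt c i) \<le> R c i j - z c j \<and> R c i j - z c j \<le> C * (1 - yt c i)"
        using ai[OF j, of c] unfolding R_def z_def yt_def bin_label_def by auto
    qed
    show "        (\<Sum>j=1..m. R c i j * Q i j) - 1 - u c i + v c i = 0 \<and>
        (\<forall>j\<in>{1..m}.
           - C * (1 + yt c i) \<le> R c i j + z c j \<and> R c i j + z c j \<le> C * (1 + yt c i) \<and>
           - C * (1 - yt c i) \<le> R c i j - z c j \<and> R c i j - z c j \<le> C * (1 - yt c i)) \<and>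
        - \<alpha> c i \<le> z c i \<and> z c i \<le> \<alpha> c i \<and>
        \<alpha> c i - C * (1 - yt c i) \<le> z c i \<and> z c i \<le> C * (1 + yt c i) - \<alpha> c i \<and>
        u c i \<le> ((\<Sum>j=1..m. C * \<bar>Q i j\<bar>) - 1) * s c i \<and> \<alpha> c i \<le> C * (1 - s c i) \<and>
        v c i \<le> ((\<Sum>j=1..m. C * \<bar>Q i j\<bar>) + 1) * t c i \<and> \<alpha> c i \<ge> C * t c i \<and>
        u c i \<ge> 0 \<and> v c i \<ge> 0 \<and>
        yt c i = 2 * yt' c i - 1"
      by (intro conjI e1 e2 e3 e4 e5 e6 e7 e8 e9)
  qed
  have feas: "milp_feasible K m C Q Qt \<epsilon> y chat pstar p b \<alpha> yt z u v yt' s t R"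
    unfolding milp_feasible_def Let_def by (intro conjI F1 F2 F3 F4 F5 F6 F7 F8)
  show ?thesis unfolding marg milp_values_def using feas by blast
qed

end


lemma adv_finite:
  assumes "\<forall>i\<in>{1..m}. y i \<in> {1..K}"
  shows "finite (adv_set K m \<epsilon> y) \<and> adv_set K m \<epsilon> y \<noteq> {}"
proof
  let ?A = "adv_set K m \<epsilon> y"
  have inj: "inj_on (\<lambda>f. restrict f {1..m}) ?A"
  proof (rule inj_onI)
    fix f g assume f: "f \<in> ?A" and g: "g \<in> ?A" and e: "restrict f {1..m} = restrict g {1..m}"
    show "f = g"
    proof
      fix i show "f i = g i"
      proof (cases "i \<in> {1..m}")
        case True thus ?thesis using e by (metis restrict_apply')
      next
        case False thus ?thesis using f g unfolding adv_set_def by auto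
      qed
    qed
  qed
  have "(\<lambda>f. restrict f {1..m}) ` ?A \<subseteq> PiE {1..m} (\<lambda>_. {1..K})"
    unfolding adv_set_def by auto
  hence "finite ((\<lambda>f. restrict f {1..m}) ` ?A)" by (rule finite_subset) (simp add: finite_PiE)
  thus "finite ?A" using inj by (rule finite_imageD)
  have "y \<in> ?A" using assms unfolding adv_set_def by auto
  thus "?A \<noteq> {}" by blast
qed

theorem theorem3:
  fixes K m :: nat and C \<epsilon> :: real and y :: "nat \<Rightarrow> nat"
    and Q :: "nat \<Rightarrow> nat \<Rightarrow> real" and Qt :: "nat \<Rightarrow> real" and chat :: nat
  assumes "K \<ge> 2" and "m \<ge> 1" and "C > 0" and "0 \<le> \<epsilon>" and "\<epsilon> \<le> 1"
    and "\<forall>i\<in>{1..m}. y i \<in> {1..K}"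
    and "\<forall>i\<in>{1..m}. \<forall>j\<in>{1..m}. Q i j = Q j i"
    and "\<exists>Qtt::real. \<forall>(x::nat \<Rightarrow> real) (x0::real).
           x0 * x0 * Qtt + 2 * x0 * (\<Sum>i=1..m. x i * Qt i)
           + (\<Sum>i=1..m. \<Sum>j=1..m. x i * x j * Q i j) \<ge> 0"
    and "chat \<in> {1..K}"
    and "\<forall>c\<in>{1..K}. class_score m C Q Qt y c \<le> class_score m C Q Qt y chat"
  shows "\<exists>opt. opt \<in> milp_values K m C Q Qt \<epsilon> y chat
           \<and> (\<forall>v\<in>milp_values K m C Q Qt \<epsilon> y chat. opt \<le> v)
           \<and> opt = (MIN yt\<in>adv_set K m \<epsilon> y. score_margin K m C Q Qt chat yt)
           \<and> (certifiably_robust K m C Q Qt \<epsilon> y chat \<longleftrightarrow> opt > 0)"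
proof -
  obtain Qtt :: real where Qtt: "\<forall>(x::nat \<Rightarrow> real) (x0::real).
           x0 * x0 * Qtt + 2 * x0 * (\<Sum>i=1..m. x i * Qt i)
           + (\<Sum>i=1..m. \<Sum>j=1..m. x i * x j * Q i j) \<ge> 0" using assms(8) by blast
  have ext: "\<forall>x x0. 0 \<le> x0 * x0 * Qtt + 2 * x0 * (\<Sum>i=1..m. x i * Qt i) + qf m Q x"
    using Qtt unfolding qf_def by blast
  let ?A = "adv_set K m \<epsilon> y"
  let ?f = "score_margin K m C Q Qt chat"
  let ?V = "milp_values K m C Q Qt \<epsilon> y chat"
  have fA: "finite ?A" and neA: "?A \<noteq> {}" using adv_finite[OF assms(6)] by auto
  have V: "?V = ?f ` ?A"
  proof
    show "?V \<subseteq> ?f ` ?A"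
    proof
      fix w assume "w \<in> ?V"
      then obtain pstar p b \<alpha> yt z u v yt' s t R where w: "w = p chat - pstar"
        and F: "milp_feasible K m C Q Qt \<epsilon> y chat pstar p b \<alpha> yt z u v yt' s t R"
        unfolding milp_values_def by blast
      obtain L where "L \<in> ?A" "p chat - pstar = ?f L"
        using milp_to_adv[OF assms(1) assms(3) assms(6) assms(7) ext assms(9) F] by blast
      thus "w \<in> ?f ` ?A" using w by auto
    qed
    show "?f ` ?A \<subseteq> ?V"
      using adv_to_milp[OF assms(1) assms(3) assms(6) assms(7) ext assms(9)] by auto
  qed
  define opt where "opt = (MIN yt\<in>?A. ?f yt)"
  have fin: "finite (?f ` ?A)" "?f ` ?A \<noteq> {}" using fA neA by auto
  show ?thesis
  proof (intro exI conjI)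
    show "opt \<in> ?V" unfolding V opt_def using fin by (rule Min_in)
    show "\<forall>v\<in>?V. opt \<le> v" unfolding V opt_def using fin(1) by auto
    show "opt = (MIN yt\<in>?A. ?f yt)" by (simp add: opt_def)
    show "certifiably_robust K m C Q Qt \<epsilon> y chat \<longleftrightarrow> opt > 0"
      unfolding certifiably_robust_def opt_def using fin by (simp add: Min_gr_iff)
  qed
qed

end
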